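(* $c_2=1$, $c_3=c_4=\frac12$, $c_5=c_6=\frac25$, $c_7=\frac38$ and $c_8=\frac4{11}$.
   Context: A weighted digraph $D=(V,A,w)$ is a digraph without loops or parallel arcs (opposite arcs allowed) with weights $w:A\to\mathbb{R}_{\ge0}$; $w(D)$ is the total arc weight. For a partition $(X,Y)$ of $V$, $w(X,Y)$ is the total weight of arcs from $X$ to $Y$, and $\mathrm{mac}(D)=\max_{(X,Y)}w(X,Y)$. For an integer $\nu\ge1$, $c_\nu$ is the supremum of reals $c\ge0$ such that every acyclic weighted digraph $D$ whose longest directed path has exactly $\nu$ vertices satisfies $\mathrm{mac}(D)\ge c\cdot w(D)$. *)

theory Defs
  imports Complex_Main
begin

text \<open>A weighted digraph on a finite vertex set V (vertices drawn from nat; every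
finite digraph is isomorphic to one of these).\<close>

definition weighted_digraph :: "nat set \<Rightarrow> (nat \<times> nat) set \<Rightarrow> (nat \<times> nat \<Rightarrow> real) \<Rightarrow> bool" where
  "weighted_digraph V A w \<longleftrightarrow> finite V \<and> A \<subseteq> V \<times> V \<and> (\<forall>v. (v, v) \<notin> A)
     \<and> (\<forall>a\<in>A. 0 \<le> w a)"

definition total_weight :: "(nat \<times> nat) set \<Rightarrow> (nat \<times> nat \<Rightarrow> real) \<Rightarrow> real" where
  "total_weight A w = (\<Sum>a\<in>A. w a)"

definition cut_weight :: "(nat \<times> nat) set \<Rightarrow> (nat \<times> nat \<Rightarrow> real) \<Rightarrow> nat set \<Rightarrow> nat set \<Rightarrow> real" where
  "cut_weight A w X Y = (\<Sum>a\<in>A \<inter> (X \<times> Y). w a)"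

definition mac :: "nat set \<Rightarrow> (nat \<times> nat) set \<Rightarrow> (nat \<times> nat \<Rightarrow> real) \<Rightarrow> real" where
  "mac V A w = Max ((\<lambda>X. cut_weight A w X (V - X)) ` Pow V)"

definition dipath :: "nat set \<Rightarrow> (nat \<times> nat) set \<Rightarrow> nat list \<Rightarrow> bool" where
  "dipath V A vs \<longleftrightarrow> vs \<noteq> [] \<and> set vs \<subseteq> V \<and> distinct vs
     \<and> (\<forall>i. Suc i < length vs \<longrightarrow> (vs ! i, vs ! Suc i) \<in> A)"

definition longest_path_vertices :: "nat set \<Rightarrow> (nat \<times> nat) set \<Rightarrow> nat \<Rightarrow> bool" where
  "longest_path_vertices V A \<nu> \<longleftrightarrow>
     (\<exists>vs. dipath V A vs \<and> length vs = \<nu>) \<and> (\<forall>vs. dipath V A vs \<longrightarrow> length vs \<le> \<nu>)"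

definition c_const :: "nat \<Rightarrow> real" where
  "c_const \<nu> = Sup {c. 0 \<le> c \<and> (\<forall>V A w. weighted_digraph V A w \<and> acyclic A
        \<and> longest_path_vertices V A \<nu> \<longrightarrow> c * total_weight A w \<le> mac V A w)}"

end

theory Submission
  imports Defs
begin


lemma dipath_reach:
  assumes "dipath V A vs" "i \<le> j" "j < length vs"
  shows "(vs ! i, vs ! j) \<in> A\<^sup>*"
  using assms(2,3)
proof (induction j)
  case 0 then show ?case by simp
next
  case (Suc j)
  show ?case
  proof (cases "i = Suc j")
    case True then show ?thesis by simp
  next
    case False
    then have "i \<le> j" using Suc by simp
    then have "(vs ! i, vs ! j) \<in> A\<^sup>*" using Suc by simp
    moreover have "(vs ! j, vs ! Suc j) \<in> A" using assms(1) Suc.prems unfolding dipath_def by blast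
    ultimately show ?thesis by (rule rtrancl_into_rtrancl)
  qed
qed

lemma dipath_snoc:
  assumes "dipath V A vs" "v \<in> V" "v \<notin> set vs" "(last vs, v) \<in> A"
  shows "dipath V A (vs @ [v])"
  unfolding dipath_def
proof (intro conjI allI impI)
  show "vs @ [v] \<noteq> []" by simp
  show "set (vs @ [v]) \<subseteq> V" using assms unfolding dipath_def by auto
  show "distinct (vs @ [v])" using assms unfolding dipath_def by auto
  fix i assume i: "Suc i < length (vs @ [v])"
  show "((vs @ [v]) ! i, (vs @ [v]) ! Suc i) \<in> A"
  proof (cases "Suc i < length vs")
    case True
    then show ?thesis using assms(1) unfolding dipath_def by (simp add: nth_append)
  next
    case False
    then have e: "Suc i = length vs" using i by simp
    have "vs \<noteq> []" using assms(1) unfolding dipath_def by simp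
    then have "vs ! i = last vs" using e by (metis diff_Suc_1 last_conv_nth)
    then show ?thesis using e assms(4) by (simp add: nth_append)
  qed
qed

lemma height_exists:
  assumes fin: "finite V" and sub: "A \<subseteq> V \<times> V" and acy: "acyclic A"
    and bd: "\<forall>vs. dipath V A vs \<longrightarrow> length vs \<le> \<nu>"
  shows "\<exists>h. (\<forall>v\<in>V. h v < \<nu>) \<and> (\<forall>u v. (u, v) \<in> A \<longrightarrow> h u < h v)"
proof -
  define P where "P v = {vs. dipath V A vs \<and> last vs = v}" for v
  define h where "h v = Max (length ` P v) - 1" for v
  have finP: "finite (P v)" for v
  proof -
    have "P v \<subseteq> {xs. set xs \<subseteq> V \<and> length xs \<le> \<nu>}" using bd unfolding P_def dipath_def by auto
    then show ?thesis using finite_lists_length_le[OF fin] finite_subset by blast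
  qed
  have neP: "[v] \<in> P v" if "v \<in> V" for v using that unfolding P_def dipath_def by simp
  have Mge1: "1 \<le> Max (length ` P v)" if "v \<in> V" for v
    using neP[OF that] finP by (metis Max_ge finite_imageI image_eqI le_trans length_Cons list.size(3) order_refl One_nat_def le_add2 plus_1_eq_Suc)
  have Mle: "Max (length ` P v) \<le> \<nu>" if "v \<in> V" for v
    using neP[OF that] finP bd unfolding P_def by (subst Max_le_iff) auto
  show ?thesis
  proof (intro exI conjI ballI allI impI)
    fix v assume "v \<in> V"
    then show "h v < \<nu>" using Mge1 Mle unfolding h_def by (meson diff_less le_trans less_le_trans zero_less_one less_one not_le)
  next
    fix u v assume uv: "(u, v) \<in> A"
    then have uV: "u \<in> V" and vV: "v \<in> V" using sub by auto
    have "Max (length ` P u) \<in> length ` P u" using finP neP[OF uV] by (intro Max_in) auto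
    then obtain vs where vs: "vs \<in> P u" "length vs = Max (length ` P u)" by auto
    have dp: "dipath V A vs" and lst: "last vs = u" using vs unfolding P_def by auto
    have vsne: "vs \<noteq> []" using dp unfolding dipath_def by simp
    have "v \<notin> set vs"
    proof
      assume "v \<in> set vs"
      then obtain i where i: "i < length vs" "vs ! i = v" by (auto simp: in_set_conv_nth)
      have "(vs ! i, vs ! (length vs - 1)) \<in> A\<^sup>*" using dipath_reach[OF dp, of i "length vs - 1"] i by simp
      moreover have "vs ! (length vs - 1) = u" using lst vsne by (simp add: last_conv_nth)
      ultimately have "(v, u) \<in> A\<^sup>*" using i by simp
      then have "(v, v) \<in> A\<^sup>+" using uv by (rule rtrancl_into_trancl1)
      then show False using acy unfolding acyclic_def by blast
    qed
    then have "vs @ [v] \<in> P v" using dipath_snoc[OF dp vV] lst uv unfolding P_def by simp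
    then have "length (vs @ [v]) \<le> Max (length ` P v)" using finP by (intro Max_ge) (simp, metis image_eqI length_append_singleton)
    then show "h u < h v" using vs Mge1[OF uV] unfolding h_def by simp
  qed
qed

lemma cut_le_mac:
  assumes "weighted_digraph V A w" "X \<subseteq> V"
  shows "cut_weight A w X (V - X) \<le> mac V A w"
  unfolding mac_def using assms unfolding weighted_digraph_def
  by (intro Max_ge) auto

definition cover :: "nat \<Rightarrow> (real \<times> nat set) list \<Rightarrow> bool" where
  "cover \<nu> D \<longleftrightarrow> (\<forall>d\<in>set D. 0 \<le> fst d) \<and>
     (\<forall>i j. i < j \<longrightarrow> j < \<nu> \<longrightarrow> 1 \<le> sum_list (map (\<lambda>(q,S). if i \<in> S \<and> j \<notin> S then q else 0) D))"

lemma sum_list_sum_swap: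
  "sum_list (map (\<lambda>d. sum (f d) A) D) = sum (\<lambda>a. sum_list (map (\<lambda>d. f d a) D)) A"
  by (induction D) (auto simp: sum.distrib)

lemma lower:
  assumes wd: "weighted_digraph V A w" and acy: "acyclic A"
    and bd: "\<forall>vs. dipath V A vs \<longrightarrow> length vs \<le> \<nu>" and cov: "cover \<nu> D"
  shows "total_weight A w \<le> sum_list (map fst D) * mac V A w"
proof -
  have fin: "finite V" and sub: "A \<subseteq> V \<times> V" and wnn: "\<forall>a\<in>A. 0 \<le> w a"
    using wd unfolding weighted_digraph_def by auto
  have finA: "finite A" using fin sub finite_subset by blast
  obtain h where hV: "\<forall>v\<in>V. h v < \<nu>" and hA: "\<forall>u v. (u, v) \<in> A \<longrightarrow> h u < h v"
    using height_exists[OF fin sub acy bd] by blast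
  define g where "g S a = (if h (fst a) \<in> S \<and> h (snd a) \<notin> S then w a else 0)" for S a
  have cut: "cut_weight A w {v\<in>V. h v \<in> S} (V - {v\<in>V. h v \<in> S}) = sum (g S) A" for S
  proof -
    have "A \<inter> ({v\<in>V. h v \<in> S} \<times> (V - {v\<in>V. h v \<in> S})) = {a\<in>A. h (fst a) \<in> S \<and> h (snd a) \<notin> S}"
      using sub by auto
    then show ?thesis unfolding cut_weight_def g_def using sum.inter_filter[OF finA] by simp
  qed
  have "total_weight A w = (\<Sum>a\<in>A. w a * 1)" unfolding total_weight_def by simp
  also have "\<dots> \<le> (\<Sum>a\<in>A. w a * sum_list (map (\<lambda>(q,S). if h (fst a) \<in> S \<and> h (snd a) \<notin> S then q else 0) D))"
  proof (intro sum_mono mult_left_mono)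
    fix a assume a: "a \<in> A"
    then obtain u v where [simp]: "a = (u, v)" and uv: "(u,v) \<in> A" by (cases a) auto
    then show "1 \<le> sum_list (map (\<lambda>(q,S). if h (fst a) \<in> S \<and> h (snd a) \<notin> S then q else 0) D)"
      using cov hA hV sub unfolding cover_def by auto
    show "0 \<le> w a" using wnn a by simp
  qed
  also have "\<dots> = (\<Sum>a\<in>A. sum_list (map (\<lambda>d. fst d * g (snd d) a) D))"
    unfolding g_def by (intro sum.cong refl) (induction D, auto simp: algebra_simps)
  also have "\<dots> = sum_list (map (\<lambda>d. sum (\<lambda>a. fst d * g (snd d) a) A) D)"
    by (rule sum_list_sum_swap[symmetric])
  also have "\<dots> = sum_list (map (\<lambda>d. fst d * cut_weight A w {v\<in>V. h v \<in> snd d} (V - {v\<in>V. h v \<in> snd d})) D)"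
    by (simp add: cut sum_distrib_left)
  also have "\<dots> \<le> sum_list (map (\<lambda>d. fst d * mac V A w) D)"
    using cov unfolding cover_def
    by (intro sum_list_mono mult_left_mono cut_le_mac[OF wd]) auto
  also have "\<dots> = sum_list (map fst D) * mac V A w"
    by (induction D) (auto simp: algebra_simps)
  finally show ?thesis .
qed



definition TL :: "nat \<Rightarrow> (nat \<times> nat) list" where
  "TL n = [(i,j). j <- [0..<n], i <- [0..<j]]"

lemma mem_TL: "(a \<in> set (TL n)) = (fst a < snd a \<and> snd a < n)"
  unfolding TL_def by (cases a) force

lemma distinct_TL: "distinct (TL n)"
proof (induction n)
  case 0 then show ?case by (simp add: TL_def)
next
  case (Suc n)
  have "TL (Suc n) = TL n @ map (\<lambda>i. (i, n)) [0..<n]" unfolding TL_def by simp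
  then show ?case using Suc mem_TL[of _ n] by (auto simp: distinct_map inj_on_def)
qed

lemma tour:
  assumes wnn: "\<forall>a. 0 \<le> w a" and n: "1 \<le> n"
  shows "weighted_digraph {0..<n} (set (TL n)) w" "acyclic (set (TL n))"
    "longest_path_vertices {0..<n} (set (TL n)) n"
    "total_weight (set (TL n)) w = sum_list (map w (TL n))"
    "X \<subseteq> {0..<n} \<Longrightarrow> cut_weight (set (TL n)) w X ({0..<n} - X)
        = sum_list (map (\<lambda>a. if fst a \<in> X \<and> snd a \<notin> X then w a else 0) (TL n))"
proof -
  show "weighted_digraph {0..<n} (set (TL n)) w"
    unfolding weighted_digraph_def using wnn mem_TL by auto
  have "(x, y) \<in> (set (TL n))\<^sup>+ \<Longrightarrow> x < y" for x y
    by (induction rule: trancl_induct) (auto simp: mem_TL)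
  then show "acyclic (set (TL n))" unfolding acyclic_def by blast
  show "longest_path_vertices {0..<n} (set (TL n)) n"
    unfolding longest_path_vertices_def
  proof (intro conjI allI impI)
    show "\<exists>vs. dipath {0..<n} (set (TL n)) vs \<and> length vs = n"
      by (rule exI[of _ "[0..<n]"]) (use n in \<open>auto simp: dipath_def mem_TL\<close>)
    fix vs assume "dipath {0..<n} (set (TL n)) vs"
    then have "set vs \<subseteq> {0..<n}" "distinct vs" unfolding dipath_def by auto
    then show "length vs \<le> n" by (metis card_atLeastLessThan card_mono distinct_card finite_atLeastLessThan diff_zero)
  qed
  show "total_weight (set (TL n)) w = sum_list (map w (TL n))"
    unfolding total_weight_def by (simp add: sum_list_distinct_conv_sum_set distinct_TL)
  assume X: "X \<subseteq> {0..<n}"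
  have "set (TL n) \<inter> (X \<times> ({0..<n} - X)) = {a \<in> set (TL n). fst a \<in> X \<and> snd a \<notin> X}"
    using mem_TL by auto
  then show "cut_weight (set (TL n)) w X ({0..<n} - X)
        = sum_list (map (\<lambda>a. if fst a \<in> X \<and> snd a \<notin> X then w a else 0) (TL n))"
    unfolding cut_weight_def
    by (simp add: sum.inter_filter sum_list_distinct_conv_sum_set distinct_TL)
qed

lemma c_const_eq:
  assumes cov: "cover \<nu> D" and s: "sum_list (map fst D) = s" "0 < s"
    and wnn: "\<forall>a. 0 \<le> w a" and n: "1 \<le> \<nu>"
    and T: "sum_list (map w (TL \<nu>)) = T" "0 < T"
    and M: "\<And>X. X \<subseteq> {0..<\<nu>} \<Longrightarrow> sum_list (map (\<lambda>a. if fst a \<in> X \<and> snd a \<notin> X then w a else 0) (TL \<nu>)) \<le> M"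
    and MT: "M / T = 1 / s"
  shows "c_const \<nu> = 1 / s"
  unfolding c_const_def
proof (rule cSup_eq_maximum)
  show "1 / s \<in> {c. 0 \<le> c \<and> (\<forall>V A w. weighted_digraph V A w \<and> acyclic A \<and> longest_path_vertices V A \<nu> \<longrightarrow>
          c * total_weight A w \<le> mac V A w)}"
  proof (intro CollectI conjI allI impI)
    show "0 \<le> 1 / s" using s by simp
    fix V A w' assume h: "weighted_digraph V A w' \<and> acyclic A \<and> longest_path_vertices V A \<nu>"
    then have "total_weight A w' \<le> s * mac V A w'"
      using lower[of V A w' \<nu> D] cov s unfolding longest_path_vertices_def by auto
    then show "1 / s * total_weight A w' \<le> mac V A w'" using s by (simp add: field_simps)
  qed
  fix c assume "c \<in> {c. 0 \<le> c \<and> (\<forall>V A w. weighted_digraph V A w \<and> acyclic A \<and> longest_path_vertices V A \<nu> \<longrightarrow>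
          c * total_weight A w \<le> mac V A w)}"
  then have c: "c * total_weight (set (TL \<nu>)) w \<le> mac {0..<\<nu>} (set (TL \<nu>)) w"
    using tour(1-3)[OF wnn n] by blast
  have "mac {0..<\<nu>} (set (TL \<nu>)) w \<le> M"
    unfolding mac_def using M tour(5)[OF wnn n] by (subst Max_le_iff) auto
  then have "c * T \<le> M" using c tour(4)[OF wnn n] T by simp
  then have "c \<le> M / T" using T by (simp add: field_simps)
  then show "c \<le> 1 / s" using MT by simp
qed



lemma cover_I:
  assumes "\<forall>d\<in>set D. 0 \<le> fst d"
    "list_all (\<lambda>(i,j). 1 \<le> sum_list (map (\<lambda>(q,S). if i \<in> S \<and> j \<notin> S then q else 0) D)) (TL \<nu>)"
  shows "cover \<nu> D"
  using assms unfolding cover_def list_all_iff by (auto simp: mem_TL)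



lemma TL2: "TL 2 = [(0,1)]"
  by (simp add: TL_def upt_rec)

definition w2 :: "nat \<times> nat \<Rightarrow> real" where
  "w2 a = (if a = (0,1) then 1 else 0)"

definition D2 :: "(real \<times> nat set) list" where
  "D2 = [(1,{0})]"

schematic_goal c2: "c_const 2 = ?c"
proof -
  have "c_const 2 = 1 / (1)"
  proof (rule c_const_eq[where D=D2 and w=w2 and T=1 and M=1])
    show "cover 2 D2" by (rule cover_I) (simp_all add: D2_def TL2)
    show "\<And>X. X \<subseteq> {0..<2} \<Longrightarrow> sum_list (map (\<lambda>a. if fst a \<in> X \<and> snd a \<notin> X then w2 a else 0) (TL 2)) \<le> 1"
      by (simp add: TL2 w2_def)
  qed (simp_all add: D2_def w2_def TL2)
  then show "c_const 2 = 1" by simp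
qed

lemma TL3: "TL 3 = [(0,1),(0,2),(1,2)]"
  by (simp add: TL_def upt_rec)

definition w3 :: "nat \<times> nat \<Rightarrow> real" where
  "w3 a = (if a = (0,1) then 1 else if a = (1,2) then 1 else 0)"

definition D3 :: "(real \<times> nat set) list" where
  "D3 = [(1,{0}),(1,{1})]"

schematic_goal c3: "c_const 3 = ?c"
proof -
  have "c_const 3 = 1 / (2)"
  proof (rule c_const_eq[where D=D3 and w=w3 and T=2 and M=1])
    show "cover 3 D3" by (rule cover_I) (simp_all add: D3_def TL3)
    show "\<And>X. X \<subseteq> {0..<3} \<Longrightarrow> sum_list (map (\<lambda>a. if fst a \<in> X \<and> snd a \<notin> X then w3 a else 0) (TL 3)) \<le> 1"
      by (simp add: TL3 w3_def)
  qed (simp_all add: D3_def w3_def TL3)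
  then show "c_const 3 = 1/2" by simp
qed

lemma TL4: "TL 4 = [(0,1),(0,2),(1,2),(0,3),(1,3),(2,3)]"
  by (simp add: TL_def upt_rec)

definition w4 :: "nat \<times> nat \<Rightarrow> real" where
  "w4 a = (if a = (0,1) then 1 else if a = (1,2) then 1 else 0)"

definition D4 :: "(real \<times> nat set) list" where
  "D4 = [(1,{0,1}),(1,{0,2})]"

schematic_goal c4: "c_const 4 = ?c"
proof -
  have "c_const 4 = 1 / (2)"
  proof (rule c_const_eq[where D=D4 and w=w4 and T=2 and M=1])
    show "cover 4 D4" by (rule cover_I) (simp_all add: D4_def TL4)
    show "\<And>X. X \<subseteq> {0..<4} \<Longrightarrow> sum_list (map (\<lambda>a. if fst a \<in> X \<and> snd a \<notin> X then w4 a else 0) (TL 4)) \<le> 1"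
      by (simp add: TL4 w4_def)
  qed (simp_all add: D4_def w4_def TL4)
  then show "c_const 4 = 1/2" by simp
qed

lemma TL5: "TL 5 = [(0,1),(0,2),(1,2),(0,3),(1,3),(2,3),(0,4),(1,4),(2,4),(3,4)]"
  by (simp add: TL_def upt_rec)

definition w5 :: "nat \<times> nat \<Rightarrow> real" where
  "w5 a = (if a = (0,1) then 1 else if a = (1,2) then 1 else if a = (1,3) then 1 else if a = (2,3) then 1 else if a = (3,4) then 1 else 0)"

definition D5 :: "(real \<times> nat set) list" where
  "D5 = [(1/2,{0,1}),(1/2,{0,2}),(1/2,{1,2}),(1/2,{0,3}),(1/2,{1,3})]"

schematic_goal c5: "c_const 5 = ?c"
proof -
  have "c_const 5 = 1 / (5/2)"
  proof (rule c_const_eq[where D=D5 and w=w5 and T=5 and M=2])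
    show "cover 5 D5" by (rule cover_I) (simp_all add: D5_def TL5)
    show "\<And>X. X \<subseteq> {0..<5} \<Longrightarrow> sum_list (map (\<lambda>a. if fst a \<in> X \<and> snd a \<notin> X then w5 a else 0) (TL 5)) \<le> 2"
      by (simp add: TL5 w5_def)
  qed (simp_all add: D5_def w5_def TL5)
  then show "c_const 5 = 2/5" by simp
qed

lemma TL6: "TL 6 = [(0,1),(0,2),(1,2),(0,3),(1,3),(2,3),(0,4),(1,4),(2,4),(3,4),(0,5),(1,5),(2,5),(3,5),(4,5)]"
  by (simp add: TL_def upt_rec)

definition w6 :: "nat \<times> nat \<Rightarrow> real" where
  "w6 a = (if a = (0,1) then 1 else if a = (1,3) then 1 else if a = (1,4) then 1 else if a = (3,4) then 1 else if a = (4,5) then 1 else 0)"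

definition D6 :: "(real \<times> nat set) list" where
  "D6 = [(1/2,{1,2}),(1/2,{0,1,3}),(1/2,{0,2,3}),(1/2,{0,1,4}),(1/2,{0,2,4})]"

schematic_goal c6: "c_const 6 = ?c"
proof -
  have "c_const 6 = 1 / (5/2)"
  proof (rule c_const_eq[where D=D6 and w=w6 and T=5 and M=2])
    show "cover 6 D6" by (rule cover_I) (simp_all add: D6_def TL6)
    show "\<And>X. X \<subseteq> {0..<6} \<Longrightarrow> sum_list (map (\<lambda>a. if fst a \<in> X \<and> snd a \<notin> X then w6 a else 0) (TL 6)) \<le> 2"
      by (simp add: TL6 w6_def)
  qed (simp_all add: D6_def w6_def TL6)
  then show "c_const 6 = 2/5" by simp
qed

lemma TL7: "TL 7 = [(0,1),(0,2),(1,2),(0,3),(1,3),(2,3),(0,4),(1,4),(2,4),(3,4),(0,5),(1,5),(2,5),(3,5),(4,5),(0,6),(1,6),(2,6),(3,6),(4,6),(5,6)]"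
  by (simp add: TL_def upt_rec)

definition w7 :: "nat \<times> nat \<Rightarrow> real" where
  "w7 a = (if a = (0,1) then 1 else if a = (1,2) then 1 else if a = (1,3) then 1 else if a = (2,3) then 1 else if a = (3,4) then 1 else if a = (3,5) then 1 else if a = (4,5) then 1 else if a = (5,6) then 1 else 0)"

definition D7 :: "(real \<times> nat set) list" where
  "D7 = [(1/3,{0,1,3}),(1/3,{0,2,3}),(1/3,{0,2,4}),(1/3,{0,1,2,4}),(1/3,{0,1,3,4}),(1/3,{0,1,5}),(1/3,{1,2,5}),(1/3,{0,2,3,5})]"

schematic_goal c7: "c_const 7 = ?c"
proof -
  have "c_const 7 = 1 / (8/3)"
  proof (rule c_const_eq[where D=D7 and w=w7 and T=8 and M=3])
    show "cover 7 D7" by (rule cover_I) (simp_all add: D7_def TL7)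
    show "\<And>X. X \<subseteq> {0..<7} \<Longrightarrow> sum_list (map (\<lambda>a. if fst a \<in> X \<and> snd a \<notin> X then w7 a else 0) (TL 7)) \<le> 3"
      by (simp add: TL7 w7_def)
  qed (simp_all add: D7_def w7_def TL7)
  then show "c_const 7 = 3/8" by simp
qed

lemma TL8: "TL 8 = [(0,1),(0,2),(1,2),(0,3),(1,3),(2,3),(0,4),(1,4),(2,4),(3,4),(0,5),(1,5),(2,5),(3,5),(4,5),(0,6),(1,6),(2,6),(3,6),(4,6),(5,6),(0,7),(1,7),(2,7),(3,7),(4,7),(5,7),(6,7)]"
  by (simp add: TL_def upt_rec)

definition w8 :: "nat \<times> nat \<Rightarrow> real" where
  "w8 a = (if a = (0,1) then 4 else if a = (1,2) then 4 else if a = (1,3) then 4 else if a = (1,4) then 1 else if a = (2,3) then 4 else if a = (2,4) then 1 else if a = (3,4) then 3 else if a = (3,5) then 2 else if a = (3,6) then 2 else if a = (4,5) then 2 else if a = (4,6) then 2 else if a = (5,6) then 2 else if a = (6,7) then 2 else 0)"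

definition D8 :: "(real \<times> nat set) list" where
  "D8 = [(1/4,{0,1,2,4}),(1/8,{0,3,4}),(1/8,{1,3,4}),(1/8,{0,1,3,4}),(1/8,{0,2,3,4}),(1/4,{0,1,2,5}),(1/8,{0,1,3,5}),(3/8,{0,2,3,5}),(1/4,{0,1,4,5}),(1/4,{1,2,6}),(3/8,{0,1,3,6}),(1/8,{0,2,3,6}),(1/4,{0,2,4,6})]"

schematic_goal c8: "c_const 8 = ?c"
proof -
  have "c_const 8 = 1 / (11/4)"
  proof (rule c_const_eq[where D=D8 and w=w8 and T=33 and M=12])
    show "cover 8 D8" by (rule cover_I) (simp_all add: D8_def TL8)
    show "\<And>X. X \<subseteq> {0..<8} \<Longrightarrow> sum_list (map (\<lambda>a. if fst a \<in> X \<and> snd a \<notin> X then w8 a else 0) (TL 8)) \<le> 12"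
      by (simp add: TL8 w8_def)
  qed (simp_all add: D8_def w8_def TL8)
  then show "c_const 8 = 4/11" by simp
qed

theorem theoremA:
  shows "c_const 2 = 1 \<and> c_const 3 = 1/2 \<and> c_const 4 = 1/2 \<and> c_const 5 = 2/5
    \<and> c_const 6 = 2/5 \<and> c_const 7 = 3/8 \<and> c_const 8 = 4/11"
  using c2 c3 c4 c5 c6 c7 c8 by simp

end
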